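(* Let $i\in\mathbb{N}$ and $f\in\mathbb{R}^n\setminus\mathbb{Z}^n$. Then $\mathcal{L}_i^n$ is $f$-closed.
   Context: $\mathcal{C}^n$ is the family of all $n$-dimensional closed convex subsets of $\mathbb{R}^n$; $\mathcal{C}^n_f$ is the subfamily of sets containing $f$ in the interior, and for $\mathcal{B}\subseteq\mathcal{C}^n$, $\mathcal{B}_f=\mathcal{B}\cap\mathcal{C}^n_f$. A set $B$ is lattice-free if $B\in\mathcal{C}^n$ and $\operatorname{int}(B)\cap\mathbb{Z}^n=\emptyset$. $\mathcal{L}_i^n$ is the family of all lattice-free polyhedra in $\mathbb{R}^n$ with at most $i$ facets. For $B\in\mathcal{C}^n$ with $0\in\operatorname{int}(B)$, $\psi_B(r)=\inf\{\lambda>0:r\in\lambda B\}$. A family $\mathcal{B}\subseteq\mathcal{C}^n$ is $f$-closed if whenever $B_t\in\mathcal{B}_f$ ($t\in\mathbb{N}$), $C\in\mathcal{C}^n_f$ and $\psi_{B_t-f}\to\psi_{C-f}$ pointwise on $\mathbb{R}^n$, then $C\in\mathcal{B}_f$. *)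

theory Defs
  imports "HOL-Analysis.Analysis"
begin

definition lattice_pts :: "(real^'n) set" where
  "lattice_pts = {x. \<forall>k. x $ k \<in> \<int>}"

definition convC :: "(real^'n) set set" where
  "convC = {B. closed B \<and> convex B \<and> aff_dim B = int CARD('n)}"

definition convC_at :: "real^'n \<Rightarrow> (real^'n) set set" where
  "convC_at f = {B \<in> convC. f \<in> interior B}"

definition fam_at :: "(real^'n) set set \<Rightarrow> real^'n \<Rightarrow> (real^'n) set set" where
  "fam_at \<B> f = \<B> \<inter> convC_at f"

definition lattice_free :: "(real^'n) set \<Rightarrow> bool" where
  "lattice_free B \<longleftrightarrow> B \<in> convC \<and> interior B \<inter> lattice_pts = {}"

definition lf_polyhedra :: "nat \<Rightarrow> (real^'n) set set" where
  "lf_polyhedra i = {P. polyhedron P \<and> lattice_free P \<and>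
      finite {F. F facet_of P} \<and> card {F. F facet_of P} \<le> i}"

definition gauge_fn :: "(real^'n) set \<Rightarrow> real^'n \<Rightarrow> real" where
  "gauge_fn B r = Inf {l. l > 0 \<and> r \<in> (\<lambda>x. l *\<^sub>R x) ` B}"

definition f_closed :: "real^'n \<Rightarrow> (real^'n) set set \<Rightarrow> bool" where
  "f_closed f \<B> \<longleftrightarrow>
     (\<forall>(Bs :: nat \<Rightarrow> (real^'n) set) C.
        (\<forall>t. Bs t \<in> fam_at \<B> f) \<longrightarrow> C \<in> convC_at f \<longrightarrow>
        (\<forall>r. (\<lambda>t. gauge_fn ((\<lambda>x. x - f) ` Bs t) r) \<longlonglongrightarrow> gauge_fn ((\<lambda>x. x - f) ` C) r) \<longrightarrow>
        C \<in> fam_at \<B> f)"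

end

theory Submission
  imports Defs
begin


fun gmax :: "(nat \<Rightarrow> real^'n) \<Rightarrow> nat \<Rightarrow> real^'n \<Rightarrow> real" where
  "gmax c 0 r = 0"
| "gmax c (Suc k) r = max (gmax c k r) (c k \<bullet> r)"

lemma gmax_nonneg: "gmax c k r \<ge> 0"
  by (induction k) auto

lemma gmax_le: "gmax c k r \<le> l \<longleftrightarrow> 0 \<le> l \<and> (\<forall>j<k. c j \<bullet> r \<le> l)"
  by (induction k) (auto simp: less_Suc_eq)

lemma gmax_less: "gmax c k r < l \<longleftrightarrow> 0 < l \<and> (\<forall>j<k. c j \<bullet> r < l)"
  by (induction k) (auto simp: less_Suc_eq)

lemma gmax_ge: "j < k \<Longrightarrow> c j \<bullet> r \<le> gmax c k r"
  using gmax_le[of c k r "gmax c k r"] by auto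

lemma gmax_tendsto:
  assumes "\<And>j. j < k \<Longrightarrow> (\<lambda>t. c t j) \<longlonglongrightarrow> d j"
  shows "(\<lambda>t. gmax (c t) k r) \<longlonglongrightarrow> gmax d k r"
  using assms
proof (induction k)
  case 0 then show ?case by simp
next
  case (Suc k)
  have "(\<lambda>t. gmax (c t) k r) \<longlonglongrightarrow> gmax d k r" using Suc by auto
  moreover have "(\<lambda>t. c t k \<bullet> r) \<longlonglongrightarrow> d k \<bullet> r"
    using Suc.prems[of k] by (intro tendsto_intros) auto
  ultimately show ?case by (simp add: tendsto_max)
qed

lemma gauge_poly:
  "gauge_fn {y. \<forall>j<k. c j \<bullet> y \<le> 1} r = gmax c k r"
proof -
  have eq: "{l. l > 0 \<and> r \<in> (\<lambda>x. l *\<^sub>R x) ` {y. \<forall>j<k. c j \<bullet> y \<le> 1}}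
        = {l. l > 0 \<and> gmax c k r \<le> l}" (is "?L = ?R")
  proof (intro set_eqI iffI)
    fix l assume "l \<in> ?L"
    then obtain y where l: "l > 0" "r = l *\<^sub>R y" "\<forall>j<k. c j \<bullet> y \<le> 1" by auto
    have "\<forall>j<k. c j \<bullet> r \<le> l"
    proof (intro allI impI)
      fix j assume "j < k"
      have "c j \<bullet> r = l * (c j \<bullet> y)" using l by simp
      also have "\<dots> \<le> l * 1" using l \<open>j<k\<close> by (intro mult_left_mono) auto
      finally show "c j \<bullet> r \<le> l" by simp
    qed
    then show "l \<in> ?R" using l by (simp add: gmax_le)
  next
    fix l assume "l \<in> ?R"
    then have l: "l > 0" "\<forall>j<k. c j \<bullet> r \<le> l" by (auto simp: gmax_le)
    have "r = l *\<^sub>R ((1/l) *\<^sub>R r)" using l by simp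
    moreover have "\<forall>j<k. c j \<bullet> ((1/l) *\<^sub>R r) \<le> 1"
      using l by (auto simp: divide_simps)
    ultimately show "l \<in> ?L" using l by blast
  qed
  show ?thesis
  proof (cases "gmax c k r = 0")
    case True
    then have "?R = {0<..}" by auto
    then show ?thesis unfolding gauge_fn_def eq using True by simp
  next
    case False
    then have "gmax c k r > 0" using gmax_nonneg[of c k r] by linarith
    then have "?R = {gmax c k r..}" by auto
    then show ?thesis unfolding gauge_fn_def eq by simp
  qed
qed



lemma gauge_char:
  fixes C :: "(real^'n) set"
  assumes "closed C" "convex C" "f \<in> interior C"
  shows "gauge_fn ((\<lambda>x. x - f) ` C) y \<le> 1 \<longleftrightarrow> y + f \<in> C"
proof -
  define S where "S = {l. l > 0 \<and> y \<in> (\<lambda>x. l *\<^sub>R x) ` (\<lambda>x. x - f) ` C}"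
  have mem: "l \<in> S \<longleftrightarrow> l > 0 \<and> f + (1/l) *\<^sub>R y \<in> C" for l
  proof
    assume "l \<in> S"
    then obtain x where "l > 0" "x \<in> C" "y = l *\<^sub>R (x - f)" unfolding S_def by auto
    then show "l > 0 \<and> f + (1/l) *\<^sub>R y \<in> C" by simp
  next
    assume h: "l > 0 \<and> f + (1/l) *\<^sub>R y \<in> C"
    then have "y = l *\<^sub>R ((f + (1/l) *\<^sub>R y) - f)" by simp
    then show "l \<in> S" unfolding S_def using h by blast
  qed
  have bdd: "bdd_below S" unfolding bdd_below_def using mem by (auto intro!: exI[of _ 0] less_imp_le)
  have fC: "f \<in> C" using assms(3) interior_subset by blast
  obtain e where e: "e > 0" "ball f e \<subseteq> C" using assms(3) mem_interior by blast
  define l0 where "l0 = 2 * (norm y + 1) / e"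
  have l0: "l0 > 0" unfolding l0_def using e by (intro divide_pos_pos) (auto intro: add_nonneg_pos)
  have "norm ((1/l0) *\<^sub>R y) < e"
  proof -
    have "norm ((1/l0) *\<^sub>R y) = norm y * e / (2 * (norm y + 1))"
      unfolding l0_def using e by (simp add: field_simps)
    also have "\<dots> < e"
    proof -
      have p: "2 * (norm y + 1) > 0" by (auto intro: add_nonneg_pos)
      have "norm y < 2*(norm y+1)" using norm_ge_zero[of y] by (simp add: algebra_simps add_nonneg_pos)
      then have "norm y * e < (2*(norm y+1)) * e" using e(1) by (rule mult_strict_right_mono)
      then show ?thesis using p by (subst divide_less_eq) (simp add: mult.commute)
    qed
    finally show ?thesis .
  qed
  then have "f + (1/l0) *\<^sub>R y \<in> C" using e by (auto simp: dist_norm intro!: subsetD[OF e(2)])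
  then have Sne: "S \<noteq> {}" using mem l0 by blast
  have gdef: "gauge_fn ((\<lambda>x. x - f) ` C) y = Inf S" unfolding gauge_fn_def S_def by simp
  show ?thesis
  proof
    assume "y + f \<in> C"
    then have "1 \<in> S" using mem by (simp add: add.commute)
    then show "gauge_fn ((\<lambda>x. x - f) ` C) y \<le> 1" unfolding gdef using bdd cInf_lower by blast
  next
    assume h: "gauge_fn ((\<lambda>x. x - f) ` C) y \<le> 1"
    have pt: "f + (1/(1+1/real (Suc n))) *\<^sub>R y \<in> C" for n
    proof -
      define m where "m = 1 + 1/real (Suc n)"
      have m: "m > 1" unfolding m_def by simp
      then have "Inf S < m" using h gdef by simp
      then obtain l where l: "l \<in> S" "l < m" using cInf_lessD[OF Sne] by blast
      then have l': "l > 0" "f + (1/l) *\<^sub>R y \<in> C" using mem by auto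
      define u where "u = l / m"
      have u: "0 < u" "u < 1" unfolding u_def using l l' m by auto
      have "f + (1/m) *\<^sub>R y = u *\<^sub>R (f + (1/l) *\<^sub>R y) + (1 - u) *\<^sub>R f"
        unfolding u_def using l' m by (simp add: algebra_simps)
      also have "\<dots> \<in> C" using convexD[OF assms(2) l'(2) fC, of u "1-u"] u by simp
      finally show ?thesis unfolding m_def .
    qed
    have "(\<lambda>n. f + (1/(1+1/real (Suc n))) *\<^sub>R y) \<longlonglongrightarrow> f + (1/(1+0)) *\<^sub>R y"
      by (intro tendsto_intros LIMSEQ_Suc[OF lim_inverse_n']) auto
    then have "f + y \<in> C" using closed_sequentially[OF assms(1)] pt by fastforce
    then show "y + f \<in> C" by (simp add: add.commute)
  qed
qed

lemma subseq_conv: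
  fixes c :: "nat \<Rightarrow> nat \<Rightarrow> real^'n"
  assumes "\<And>t j. j < k \<Longrightarrow> norm (c t j) \<le> M"
  shows "\<exists>\<sigma> d. strict_mono \<sigma> \<and> (\<forall>j<k. (\<lambda>t. c (\<sigma> t) j) \<longlonglongrightarrow> d j)"
  using assms
proof (induction k)
  case 0
  show ?case by (rule exI[of _ id]) (auto simp: strict_mono_def)
next
  case (Suc k)
  then obtain \<sigma> d where sd: "strict_mono \<sigma>" "\<forall>j<k. (\<lambda>t. c (\<sigma> t) j) \<longlonglongrightarrow> d j" by force
  have "bounded (range (\<lambda>t. c (\<sigma> t) k))"
    using Suc.prems[of k] by (auto simp: bounded_iff)
  then obtain l \<rho> where lr: "strict_mono \<rho>" "((\<lambda>t. c (\<sigma> t) k) \<circ> \<rho>) \<longlonglongrightarrow> l"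
    using bounded_imp_convergent_subsequence by blast
  have "\<forall>j<Suc k. (\<lambda>t. c ((\<sigma> \<circ> \<rho>) t) j) \<longlonglongrightarrow> (d(k := l)) j"
  proof (intro allI impI)
    fix j assume "j < Suc k"
    show "(\<lambda>t. c ((\<sigma> \<circ> \<rho>) t) j) \<longlonglongrightarrow> (d(k := l)) j"
    proof (cases "j = k")
      case True then show ?thesis using lr by (simp add: o_def)
    next
      case False
      then have "j < k" using \<open>j < Suc k\<close> by simp
      then have "((\<lambda>t. c (\<sigma> t) j) \<circ> \<rho>) \<longlonglongrightarrow> d j" using sd lr LIMSEQ_subseq_LIMSEQ by blast
      then show ?thesis using False by (simp add: o_def)
    qed
  qed
  then show ?case using strict_mono_o[OF sd(1) lr(1)] by blast
qed



lemma poly_count: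
  fixes d :: "nat \<Rightarrow> real^'n" and p :: "nat \<Rightarrow> real"
  assumes S: "S = {x. \<forall>j<k. d j \<bullet> x \<le> p j}" and z: "\<forall>j<k. d j = 0 \<longrightarrow> p j \<ge> 0"
  shows "polyhedron S \<and> finite {F. F facet_of S} \<and> card {F. F facet_of S} \<le> k"
proof -
  define H where "H = (\<lambda>j. {x. d j \<bullet> x \<le> p j}) ` {j. j<k \<and> d j \<noteq> 0}"
  have finH: "finite H" unfolding H_def by auto
  have cardH: "card H \<le> k"
  proof -
    have "card H \<le> card {j. j<k \<and> d j \<noteq> 0}" unfolding H_def by (rule card_image_le) auto
    also have "\<dots> \<le> card {..<k}" by (rule card_mono) auto
    finally show ?thesis by simp
  qed
  have SH: "S = \<Inter>H"
  proof (intro set_eqI iffI)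
    fix x assume "x \<in> S" then show "x \<in> \<Inter>H" unfolding S H_def by auto
  next
    fix x assume x: "x \<in> \<Inter>H"
    have "d j \<bullet> x \<le> p j" if "j < k" for j
    proof (cases "d j = 0")
      case True then show ?thesis using z that by simp
    next
      case False then show ?thesis using x that unfolding H_def by auto
    qed
    then show "x \<in> S" unfolding S by auto
  qed
  have hH: "\<forall>h\<in>H. \<exists>a b. a \<noteq> 0 \<and> h = {x. a \<bullet> x \<le> b}" unfolding H_def by auto
  have poly: "polyhedron S" unfolding polyhedron_def using finH SH hH by blast
  define P where "P G \<longleftrightarrow> G \<subseteq> H \<and> S = affine hull S \<inter> \<Inter>G" for G
  have "P H" unfolding P_def using SH hull_subset[of S affine] by auto
  then obtain G where G: "P G" and Gmin: "\<And>G'. P G' \<Longrightarrow> card G \<le> card G'"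
    using ex_has_least_nat[of P H card] by blast
  have GH: "G \<subseteq> H" and SG: "S = affine hull S \<inter> \<Inter>G" using G unfolding P_def by auto
  have finG: "finite G" using GH finH finite_subset by blast
  have "\<forall>h\<in>G. \<exists>a b. a \<noteq> 0 \<and> h = {x. a \<bullet> x \<le> b}" using hH GH by blast
  then obtain a b where ab: "\<And>h. h \<in> G \<Longrightarrow> a h \<noteq> 0 \<and> h = {x. a h \<bullet> x \<le> b h}" by metis
  have psub: "S \<subset> affine hull S \<inter> \<Inter>F'" if "F' \<subset> G" for F'
  proof -
    have "card F' < card G" using that finG psubset_card_mono by blast
    then have "\<not> P F'" using Gmin by fastforce
    moreover have "F' \<subseteq> H" using that GH by blast
    ultimately have "S \<noteq> affine hull S \<inter> \<Inter>F'" unfolding P_def by blast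
    moreover have "S \<subseteq> affine hull S \<inter> \<Inter>F'" using SG that by blast
    ultimately show ?thesis by blast
  qed
  have sub: "{F. F facet_of S} \<subseteq> (\<lambda>h. S \<inter> {x. a h \<bullet> x = b h}) ` G"
    using facet_of_polyhedron_explicit[OF finG SG ab psub] by blast
  have fin: "finite {F. F facet_of S}" using sub finG finite_subset by blast
  have "card {F. F facet_of S} \<le> card ((\<lambda>h. S \<inter> {x. a h \<bullet> x = b h}) ` G)"
    using sub finG by (intro card_mono) auto
  also have "\<dots> \<le> card G" using card_image_le finG by blast
  also have "\<dots> \<le> card H" using GH finH card_mono by blast
  finally show ?thesis using poly fin cardH by simp
qed



lemma rep:
  fixes B :: "(real^'n) set"
  assumes poly: "polyhedron B" and ah: "affine hull B = UNIV" and fint: "f \<in> interior B"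
    and finF: "finite {F. F facet_of B}" and cardF: "card {F. F facet_of B} \<le> k"
  shows "\<exists>c. (\<lambda>x. x - f) ` B = {y. \<forall>j<k. c j \<bullet> y \<le> 1}"
proof -
  obtain F where "finite F" and seq: "B = affine hull B \<inter> \<Inter>F"
             and faces: "\<And>h. h \<in> F \<Longrightarrow> \<exists>a b. a \<noteq> 0 \<and> h = {x. a \<bullet> x \<le> b}"
             and min: "\<And>F'. F' \<subset> F \<Longrightarrow> B \<subset> (affine hull B) \<inter> \<Inter>F'"
    using poly by (simp add: polyhedron_Int_affine_minimal) meson
  then obtain a b where ab: "\<And>h. h \<in> F \<Longrightarrow> a h \<noteq> 0 \<and> h = {x. a h \<bullet> x \<le> b h}"
    by metis
  have BF: "B = \<Inter>F" using seq ah by simp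
  have mem: "x \<in> h \<longleftrightarrow> a h \<bullet> x \<le> b h" if "h \<in> F" for h x
  proof -
    have "h = {x. a h \<bullet> x \<le> b h}" using ab[OF that] by blast
    then show ?thesis by (metis mem_Collect_eq)
  qed
  have anz: "a h \<noteq> 0" if "h \<in> F" for h using ab[OF that] by blast
  define \<phi> where "\<phi> h = B \<inter> {x. a h \<bullet> x = b h}" for h
  have facet: "\<phi> h facet_of B" if "h \<in> F" for h
    unfolding \<phi>_def using facet_of_polyhedron_explicit[OF \<open>finite F\<close> seq ab min] that by blast
  have inj: "inj_on \<phi> F"
  proof (rule inj_onI, rule ccontr)
    fix h1 h2 assume h1: "h1 \<in> F" and h2: "h2 \<in> F" and eq: "\<phi> h1 = \<phi> h2" and ne: "h1 \<noteq> h2"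
    have "F - {h2} \<subset> F" using h2 by blast
    then have "B \<subset> \<Inter>(F - {h2})" using min ah by simp
    then obtain x where x: "x \<in> \<Inter>(F - {h2})" "x \<notin> B" by blast
    have "x \<notin> h2" using x BF by blast
    then have ax: "a h2 \<bullet> x > b h2" using mem[OF h2] by auto
    have "\<phi> h1 \<noteq> B" using facet[OF h1] by auto
    moreover have "\<phi> h1 \<subseteq> B" unfolding \<phi>_def by auto
    ultimately obtain z where z: "z \<in> B" "z \<notin> \<phi> h1" by blast
    have "z \<in> h1" using z BF h1 by blast
    then have "a h1 \<bullet> z \<le> b h1" using mem[OF h1] by blast
    then have az1: "a h1 \<bullet> z < b h1" using z unfolding \<phi>_def by auto
    have "z \<in> h2" using z BF h2 by blast
    then have az2: "a h2 \<bullet> z \<le> b h2" using mem[OF h2] by auto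
    define u where "u = (b h2 - a h2 \<bullet> z) / (a h2 \<bullet> x - a h2 \<bullet> z)"
    have u: "0 \<le> u" "u < 1" unfolding u_def using ax az2 by (auto simp: divide_simps)
    define y where "y = (1 - u) *\<^sub>R z + u *\<^sub>R x"
    have ay2: "a h2 \<bullet> y = b h2"
    proof -
      have "a h2 \<bullet> y = a h2 \<bullet> z + u * (a h2 \<bullet> x - a h2 \<bullet> z)"
        unfolding y_def by (simp add: inner_add_right algebra_simps)
      also have "\<dots> = b h2" unfolding u_def using ax az2 by simp
      finally show ?thesis .
    qed
    have "y \<in> h" if h: "h \<in> F" for h
    proof (cases "h = h2")
      case True then show ?thesis using mem[OF h2] ay2 by auto
    next
      case False
      then have "x \<in> h" using x h by blast
      moreover have "z \<in> h" using z BF h by blast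
      moreover have "convex h" using ab[OF h] convex_halfspace_le by metis
      ultimately show ?thesis unfolding y_def using u by (intro convexD) auto
    qed
    then have "y \<in> B" using BF by blast
    then have "y \<in> \<phi> h1" using eq ay2 unfolding \<phi>_def by auto
    then have "a h1 \<bullet> y = b h1" unfolding \<phi>_def by auto
    moreover have "a h1 \<bullet> y < b h1"
    proof -
      have "x \<in> h1" using x h1 ne by blast
      then have ax1: "a h1 \<bullet> x \<le> b h1" using mem[OF h1] by auto
      have "a h1 \<bullet> y = (1 - u) * (a h1 \<bullet> z) + u * (a h1 \<bullet> x)"
        unfolding y_def by (simp add: inner_add_right)
      also have "\<dots> < (1 - u) * b h1 + u * b h1"
        using u az1 ax1 by (intro add_less_le_mono mult_strict_left_mono mult_left_mono) auto
      also have "\<dots> = b h1" by (simp add: algebra_simps)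
      finally show ?thesis .
    qed
    ultimately show False by simp
  qed
  have cardFk: "card F \<le> k"
  proof -
    have "card F = card (\<phi> ` F)" using card_image[OF inj] by simp
    also have "\<dots> \<le> card {F. F facet_of B}" using facet finF by (intro card_mono) auto
    finally show ?thesis using cardF by simp
  qed
  obtain e where e: "e > 0" "ball f e \<subseteq> B" using fint mem_interior by blast
  have af: "a h \<bullet> f < b h" if h: "h \<in> F" for h
  proof -
    have an: "norm (a h) > 0" using anz[OF h] by simp
    define q where "q = f + (e / 2 / norm (a h)) *\<^sub>R a h"
    have "dist f q < e" unfolding q_def dist_norm using e an by simp
    then have "q \<in> B" using e(2) by (auto simp: dist_commute)
    then have "q \<in> h" using BF h by blast
    then have "a h \<bullet> q \<le> b h" using mem[OF h] by auto
    moreover have "a h \<bullet> q = a h \<bullet> f + e / 2 * norm (a h)"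
      unfolding q_def using an by (simp add: inner_add_right power2_eq_square flip: power2_norm_eq_inner)
    moreover have "e / 2 * norm (a h) > 0" using e an by simp
    ultimately show ?thesis by linarith
  qed
  define A where "A = (\<lambda>h. (1 / (b h - a h \<bullet> f)) *\<^sub>R a h) ` F"
  have finA: "finite A" unfolding A_def using \<open>finite F\<close> by simp
  have cardA: "card A \<le> k" unfolding A_def using card_image_le[OF \<open>finite F\<close>] cardFk le_trans by blast
  have eqA: "(\<lambda>x. x - f) ` B = {y. \<forall>v\<in>A. v \<bullet> y \<le> 1}"
  proof -
    have "y \<in> (\<lambda>x. x - f) ` B \<longleftrightarrow> y + f \<in> B" for y
      by (auto simp: image_iff intro!: bexI[of _ "y + f"])
    moreover have "y + f \<in> B \<longleftrightarrow> (\<forall>v\<in>A. v \<bullet> y \<le> 1)" for y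
    proof -
      have "y + f \<in> B \<longleftrightarrow> (\<forall>h\<in>F. a h \<bullet> (y + f) \<le> b h)" using BF mem by auto
      also have "\<dots> \<longleftrightarrow> (\<forall>h\<in>F. (1 / (b h - a h \<bullet> f)) *\<^sub>R a h \<bullet> y \<le> 1)"
      proof -
        have "a h \<bullet> (y + f) \<le> b h \<longleftrightarrow> (1 / (b h - a h \<bullet> f)) *\<^sub>R a h \<bullet> y \<le> 1" if "h \<in> F" for h
          using af[OF that] by (simp add: inner_add_right divide_simps) linarith
        then show ?thesis by auto
      qed
      finally show ?thesis unfolding A_def by auto
    qed
    ultimately show ?thesis by auto
  qed
  obtain xs where xs: "set xs = A" "distinct xs" using finite_distinct_list[OF finA] by blast
  have len: "length xs \<le> k" using xs cardA distinct_card by fastforce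
  define c where "c j = (if j < length xs then xs ! j else 0)" for j
  have eqc: "{y. \<forall>v\<in>A. v \<bullet> y \<le> (1::real)} = {y. \<forall>j<k. c j \<bullet> y \<le> 1}"
  proof (intro set_eqI iffI)
    fix y assume "y \<in> {y. \<forall>v\<in>A. v \<bullet> y \<le> (1::real)}"
    then show "y \<in> {y. \<forall>j<k. c j \<bullet> y \<le> 1}" unfolding c_def using xs(1) by auto
  next
    fix y assume y: "y \<in> {y. \<forall>j<k. c j \<bullet> y \<le> 1}"
    show "y \<in> {y. \<forall>v\<in>A. v \<bullet> y \<le> (1::real)}"
    proof (clarify)
      fix v assume "v \<in> A"
      then obtain j where "j < length xs" "v = xs ! j" using xs(1) in_set_conv_nth by metis
      moreover have "j < k" using \<open>j < length xs\<close> len by simp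
      ultimately have "c j \<bullet> y \<le> 1" using y by auto
      then show "v \<bullet> y \<le> 1" using \<open>j < length xs\<close> \<open>v = xs ! j\<close> unfolding c_def by simp
    qed
  qed
  show ?thesis by (rule exI[of _ c]) (simp only: eqA eqc)
qed



lemma norm_lt_two: "norm (x::'a::real_normed_vector) < 2 * (norm x + 1)"
proof -
  have a: "0 \<le> norm x" by simp
  have "0 < norm x + 2" using a by (rule add_nonneg_pos) simp
  then have "norm x < norm x + (norm x + 2)" by simp
  also have "\<dots> = 2 * (norm x + 1)" by simp
  finally show ?thesis .
qed

lemma two_norm_pos: "0 < 2 * (norm (x::'a::real_normed_vector) + 1)"
proof -
  have a: "0 \<le> norm x" by simp
  have "0 < norm x + 1" using a by (rule add_nonneg_pos) simp
  then show ?thesis by simp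
qed

theorem proposition3p7:
  fixes f :: "real^'n" and i :: nat
  assumes "f \<notin> lattice_pts"
  shows "f_closed f (lf_polyhedra i :: (real^'n) set set)"
  unfolding f_closed_def
proof (intro allI impI)
  fix Bs :: "nat \<Rightarrow> (real^'n) set" and C :: "(real^'n) set"
  assume hB: "\<forall>t. Bs t \<in> fam_at (lf_polyhedra i) f" and hC: "C \<in> convC_at f"
    and hlim: "\<forall>r. (\<lambda>t. gauge_fn ((\<lambda>x. x - f) ` Bs t) r) \<longlonglongrightarrow> gauge_fn ((\<lambda>x. x - f) ` C) r"
  have Bt: "Bs t \<in> lf_polyhedra i" "Bs t \<in> convC_at f" for t using hB unfolding fam_at_def by auto
  have "\<exists>c. (\<lambda>x. x - f) ` Bs t = {y. \<forall>j<i. c j \<bullet> y \<le> 1}" for t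
  proof (rule rep)
    show "polyhedron (Bs t)" "finite {F. F facet_of Bs t}" "card {F. F facet_of Bs t} \<le> i"
      using Bt(1)[of t] unfolding lf_polyhedra_def by auto
    show "f \<in> interior (Bs t)" using Bt(2)[of t] unfolding convC_at_def by auto
    have "aff_dim (Bs t) = int DIM(real^'n)" using Bt(2)[of t] unfolding convC_at_def convC_def by simp
    then show "affine hull (Bs t) = UNIV" using aff_dim_eq_full by blast
  qed
  then have "\<forall>t. \<exists>c. (\<lambda>x. x - f) ` Bs t = {y. \<forall>j<i. c j \<bullet> y \<le> 1}" by blast
  from choice[OF this] obtain c where c0: "\<forall>t. (\<lambda>x. x - f) ` Bs t = {y. \<forall>j<i. c t j \<bullet> y \<le> 1}" by blast
  then have c: "\<And>t. (\<lambda>x. x - f) ` Bs t = {y. \<forall>j<i. c t j \<bullet> y \<le> 1}" by blast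
  define C' where "C' = (\<lambda>x. x - f) ` C"
  have hlim': "(\<lambda>t. gmax (c t) i r) \<longlonglongrightarrow> gauge_fn C' r" for r
  proof -
    have "gauge_fn ((\<lambda>x. x - f) ` Bs t) r = gmax (c t) i r" for t using c[of t] gauge_poly by simp
    then show ?thesis using hlim[rule_format, of r] unfolding C'_def by simp
  qed
  have "\<exists>K. \<forall>t. \<bar>gmax (c t) i r\<bar> \<le> K" for r
    using convergent_imp_Bseq[OF convergentI[OF hlim'[of r]]] unfolding Bseq_def by auto
  then have "\<forall>r. \<exists>K. \<forall>t. \<bar>gmax (c t) i r\<bar> \<le> K" by blast
  from choice[OF this] obtain K where K0: "\<forall>r t. \<bar>gmax (c t) i r\<bar> \<le> K r" by blast
  then have K: "\<And>r t. \<bar>gmax (c t) i r\<bar> \<le> K r" by blast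
  define M where "M = (\<Sum>q\<in>UNIV. K (axis q 1) + K (- axis q 1))"
  have bnd: "norm (c t j) \<le> M" if "j < i" for t j
  proof -
    have comp: "\<bar>c t j $ q\<bar> \<le> K (axis q 1) + K (- axis q 1)" for q
    proof -
      have "c t j $ q = c t j \<bullet> axis q 1" by (simp add: inner_axis)
      also have "\<dots> \<le> gmax (c t) i (axis q 1)" using gmax_ge that by blast
      also have "\<dots> \<le> K (axis q 1)" using K abs_le_D1 by blast
      finally have 1: "c t j $ q \<le> K (axis q 1)" .
      have "- (c t j $ q) = c t j \<bullet> (- axis q 1)" by (simp add: inner_axis)
      also have "\<dots> \<le> gmax (c t) i (- axis q 1)" using gmax_ge that by blast
      also have "\<dots> \<le> K (- axis q 1)" using K abs_le_D1 by blast
      finally have 2: "- (c t j $ q) \<le> K (- axis q 1)" .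
      have "0 \<le> K (axis q 1)" "0 \<le> K (- axis q 1)" using K[where r="axis q 1" and t=t] K[where r="- axis q 1" and t=t] by auto
      then show ?thesis using 1 2 by linarith
    qed
    have "norm (c t j) \<le> (\<Sum>q\<in>UNIV. \<bar>c t j $ q\<bar>)" by (rule norm_le_l1_cart)
    also have "\<dots> \<le> M" unfolding M_def by (rule sum_mono) (rule comp)
    finally show ?thesis .
  qed
  obtain \<sigma> d where sd: "strict_mono \<sigma>" "\<forall>j<i. (\<lambda>t. c (\<sigma> t) j) \<longlonglongrightarrow> d j"
    using subseq_conv[of i c M] bnd by blast
  have lim1: "(\<lambda>t. gmax (c (\<sigma> t)) i r) \<longlonglongrightarrow> gmax d i r" for r
    using gmax_tendsto[of i "\<lambda>t. c (\<sigma> t)" d r] sd(2) by blast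
  have lim2: "(\<lambda>t. gmax (c (\<sigma> t)) i r) \<longlonglongrightarrow> gauge_fn C' r" for r
    using LIMSEQ_subseq_LIMSEQ[OF hlim'[of r] sd(1)] by (simp add: o_def)
  have gC: "gauge_fn C' r = gmax d i r" for r using LIMSEQ_unique[OF lim2 lim1] .
  have Cp: "closed C" "convex C" "f \<in> interior C" using hC unfolding convC_at_def convC_def by auto
  have Ceq: "C = {x. \<forall>j<i. d j \<bullet> x \<le> 1 + d j \<bullet> f}"
  proof (intro set_eqI)
    fix x
    have "x \<in> C \<longleftrightarrow> gauge_fn C' (x - f) \<le> 1"
      using gauge_char[OF Cp, of "x - f"] unfolding C'_def by simp
    also have "\<dots> \<longleftrightarrow> (\<forall>j<i. d j \<bullet> (x - f) \<le> 1)" unfolding gC gmax_le by simp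
    also have "\<dots> \<longleftrightarrow> (\<forall>j<i. d j \<bullet> x \<le> 1 + d j \<bullet> f)" by (simp add: inner_diff_right algebra_simps)
    finally show "x \<in> C \<longleftrightarrow> x \<in> {x. \<forall>j<i. d j \<bullet> x \<le> 1 + d j \<bullet> f}" by simp
  qed
  have pc: "polyhedron C \<and> finite {F. F facet_of C} \<and> card {F. F facet_of C} \<le> i"
    by (rule poly_count[OF Ceq]) simp
  have lf: "interior C \<inter> lattice_pts = {}"
  proof (rule ccontr)
    assume "interior C \<inter> lattice_pts \<noteq> {}"
    then obtain z where z: "z \<in> interior C" "z \<in> lattice_pts" by blast
    obtain e where e: "e > 0" "ball z e \<subseteq> C" using z(1) mem_interior by blast
    define s where "s = e / (2 * (norm (z - f) + 1))"
    have p: "2 * (norm (z - f) + 1) > 0" by (rule two_norm_pos)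
    have s: "s > 0" unfolding s_def using e p by simp
    have "norm (s *\<^sub>R (z - f)) < e"
    proof -
      have "norm (z - f) < 2*(norm (z - f)+1)" by (rule norm_lt_two)
      then have "norm (z - f) * e < (2*(norm (z - f)+1)) * e" using e(1) by (rule mult_strict_right_mono)
      then have "e * norm (z - f) / (2 * (norm (z - f) + 1)) < e" using p by (subst divide_less_eq) (simp add: mult.commute)
      then show ?thesis unfolding s_def using e by simp
    qed
    then have "z + s *\<^sub>R (z - f) \<in> C" using e(2) by (auto simp: dist_norm)
    then have w: "d j \<bullet> (z + s *\<^sub>R (z - f)) \<le> 1 + d j \<bullet> f" if "j < i" for j using Ceq that by blast
    have "d j \<bullet> (z - f) < 1" if "j < i" for j
    proof -
      have "(1 + s) * (d j \<bullet> (z - f)) \<le> 1" using w[OF that] by (simp add: inner_diff_right algebra_simps)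
      then show ?thesis using s by (smt (verit) mult_le_cancel_right1 mult.commute)
    qed
    then have "gmax d i (z - f) < 1" by (simp add: gmax_less)
    then have "eventually (\<lambda>t. gmax (c (\<sigma> t)) i (z - f) < 1) sequentially"
      using order_tendstoD(2)[OF lim1] by blast
    then obtain N where "gmax (c (\<sigma> N)) i (z - f) < 1" by (auto simp: eventually_sequentially)
    then have zN: "\<forall>j<i. c (\<sigma> N) j \<bullet> (z - f) < 1" by (simp add: gmax_less)
    define U where "U = (\<Inter>j\<in>{..<i}. {x. c (\<sigma> N) j \<bullet> x < 1 + c (\<sigma> N) j \<bullet> f})"
    have "open U" unfolding U_def by (intro open_INT) (auto intro: open_halfspace_lt)
    moreover have "z \<in> U" using zN unfolding U_def by (auto simp: inner_diff_right)
    moreover have "U \<subseteq> Bs (\<sigma> N)"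
    proof
      fix x assume "x \<in> U"
      have "\<forall>j<i. c (\<sigma> N) j \<bullet> (x - f) \<le> 1"
      proof (intro allI impI)
        fix j assume "j < i"
        then have "c (\<sigma> N) j \<bullet> x < 1 + c (\<sigma> N) j \<bullet> f" using \<open>x \<in> U\<close> unfolding U_def by auto
        then show "c (\<sigma> N) j \<bullet> (x - f) \<le> 1" by (simp add: inner_diff_right)
      qed
      then have "x - f \<in> {y. \<forall>j<i. c (\<sigma> N) j \<bullet> y \<le> 1}" by simp
      then have "x - f \<in> (\<lambda>x. x - f) ` Bs (\<sigma> N)" using c by blast
      then show "x \<in> Bs (\<sigma> N)" by auto
    qed
    ultimately have "z \<in> interior (Bs (\<sigma> N))" using interior_maximal by (metis interior_open subsetD interior_mono)
    moreover have "interior (Bs (\<sigma> N)) \<inter> lattice_pts = {}"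
      using Bt(1)[of "\<sigma> N"] unfolding lf_polyhedra_def lattice_free_def by auto
    ultimately show False using z(2) by blast
  qed
  have "C \<in> convC" using hC unfolding convC_at_def by auto
  then show "C \<in> fam_at (lf_polyhedra i) f"
    using hC pc lf unfolding fam_at_def lf_polyhedra_def lattice_free_def by auto
qed

end
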